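(* Let $q$ be a prime power and $1\le t_i\le t_o\le s$. If there exists a linear $(t_i,t_o,s,q)$-AONT, then there exists a linear $(t_i,t_o',s,q)$-AONT for every $t_o'$ with $t_o\le t_o'\le s$.
   Context: A linear $(t_i,t_o,s,q)$-AONT is given by an invertible $s\times s$ matrix $M$ over $\mathbb{F}_q$ defining the map $\mathbf{x}\mapsto\mathbf{y}=\mathbf{x}M^{-1}$ on row vectors of $\mathbb{F}_q^s$, such that for every set $I$ of $t_i$ input coordinates and every set $J$ of $s-t_o$ output coordinates, the pair $((x_i)_{i\in I},(y_j)_{j\in J})$ takes every value in $\mathbb{F}_q^{t_i+s-t_o}$ equally often as $\mathbf{x}$ ranges over $\mathbb{F}_q^s$. Equivalently, $M$ is invertible and every $t_o\times t_i$ submatrix of $M$ has rank $t_i$. *)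

theory Defs
  imports "Jordan_Normal_Form.Matrix" "HOL-Library.FuncSet"
begin

definition row_vec_mult :: "'a::semiring_0 vec \<Rightarrow> 'a mat \<Rightarrow> 'a vec" where
  "row_vec_mult x M = vec (dim_col M) (\<lambda>j. x \<bullet> col M j)"

definition inv_of_mat :: "'a::semiring_1 mat \<Rightarrow> 'a mat" where
  "inv_of_mat M = (SOME N. inverts_mat M N \<and> inverts_mat N M)"

(* Linear (t_i, t_o, s, q)-AONT over the finite field 'a (q = CARD('a)), coordinates 0..s-1:
   M is an invertible s x s matrix, and for every set I of t_i input coordinates and every
   set J of s - t_o output coordinates, the pair ((x_i)_{i in I}, (y_j)_{j in J}), with
   y = x M^{-1}, takes every value equally often as x ranges over F_q^s. *)
definition linear_AONT :: "nat \<Rightarrow> nat \<Rightarrow> nat \<Rightarrow> 'a::{field,finite} mat \<Rightarrow> bool" where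
  "linear_AONT ti to s M \<longleftrightarrow>
     M \<in> carrier_mat s s \<and> invertible_mat M \<and>
     (\<forall>I J. I \<subseteq> {..<s} \<and> card I = ti \<and> J \<subseteq> {..<s} \<and> card J = s - to \<longrightarrow>
        (\<exists>c. \<forall>a \<in> I \<rightarrow>\<^sub>E (UNIV :: 'a set). \<forall>b \<in> J \<rightarrow>\<^sub>E (UNIV :: 'a set).
           card {x \<in> carrier_vec s.
                  restrict (vec_index x) I = a \<and>
                  restrict (vec_index (row_vec_mult x (inv_of_mat M))) J = b} = c))"

end

theory Submission
  imports Defs
begin

lemma ext_card:
  assumes "J' \<subseteq> J" and b': "b' \<in> J' \<rightarrow>\<^sub>E (UNIV :: 'a set)"
  shows "card {b \<in> J \<rightarrow>\<^sub>E (UNIV :: 'a set). restrict b J' = b'} = card ((J - J') \<rightarrow>\<^sub>E (UNIV :: 'a set))"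
proof (rule bij_betw_same_card[where f = "\<lambda>b. restrict b (J - J')"])
  let ?E = "{b \<in> J \<rightarrow>\<^sub>E (UNIV :: 'a set). restrict b J' = b'}"
  show "bij_betw (\<lambda>b. restrict b (J - J')) ?E ((J - J') \<rightarrow>\<^sub>E UNIV)"
  proof (rule bij_betw_byWitness[where f' = "\<lambda>g j. if j \<in> J' then b' j else if j \<in> J then g j else undefined"])
    show "\<forall>a\<in>?E. (\<lambda>g j. if j \<in> J' then b' j else if j \<in> J then g j else undefined) (restrict a (J - J')) = a"
    proof
      fix a assume a: "a \<in> ?E"
      show "(\<lambda>g j. if j \<in> J' then b' j else if j \<in> J then g j else undefined) (restrict a (J - J')) = a"
      proof
        fix j
        show "(if j \<in> J' then b' j else if j \<in> J then restrict a (J - J') j else undefined) = a j"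
        proof -
          have aJ: "a \<in> J \<rightarrow>\<^sub>E UNIV" and ab: "restrict a J' = b'" using a by auto
          consider "j \<in> J'" | "j \<notin> J'" "j \<in> J" | "j \<notin> J" by blast
          then show ?thesis
          proof cases
            case 1
            have "b' j = restrict a J' j" using ab by simp
            then show ?thesis using 1 by simp
          next
            case 2 then show ?thesis by simp
          next
            case 3
            have "a j = undefined" using aJ 3 by (simp add: PiE_def extensional_def)
            then show ?thesis using 3 assms(1) by auto
          qed
        qed
      qed
    qed
    show "\<forall>a'\<in>(J - J') \<rightarrow>\<^sub>E UNIV. restrict ((\<lambda>g j. if j \<in> J' then b' j else if j \<in> J then g j else undefined) a') (J - J') = a'"
    proof (intro ballI ext)
      fix a' j assume a': "a' \<in> (J - J') \<rightarrow>\<^sub>E (UNIV :: 'a set)"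
      show "restrict ((\<lambda>g j. if j \<in> J' then b' j else if j \<in> J then g j else undefined) a') (J - J') j = a' j"
      proof (cases "j \<in> J - J'")
        case True then show ?thesis by simp
      next
        case False then show ?thesis using PiE_arb[OF a' False] by simp
      qed
    qed
    show "(\<lambda>b. restrict b (J - J')) ` ?E \<subseteq> (J - J') \<rightarrow>\<^sub>E UNIV" by auto
    show "(\<lambda>g j. if j \<in> J' then b' j else if j \<in> J then g j else undefined) ` ((J - J') \<rightarrow>\<^sub>E UNIV) \<subseteq> ?E"
    proof (rule image_subsetI)
      fix g assume g: "g \<in> (J - J') \<rightarrow>\<^sub>E (UNIV :: 'a set)"
      let ?h = "(\<lambda>j. if j \<in> J' then b' j else if j \<in> J then g j else undefined)"
      have "?h \<in> J \<rightarrow>\<^sub>E UNIV"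
      proof (rule PiE_I)
        fix j assume "j \<notin> J" then show "?h j = undefined" using assms(1) by auto
      qed simp
      moreover have "restrict ?h J' = b'"
      proof
        fix j show "restrict ?h J' j = b' j"
        proof (cases "j \<in> J'")
          case True then show ?thesis by simp
        next
          case False then show ?thesis using PiE_arb[OF b' False] by simp
        qed
      qed
      ultimately show "?h \<in> ?E" by blast
    qed
  qed
qed

lemma marg:
  fixes h :: "'x \<Rightarrow> nat \<Rightarrow> 'a::finite"
  assumes S: "finite S" and JJ: "J' \<subseteq> J" and fJ: "finite J"
    and H: "\<forall>b \<in> J \<rightarrow>\<^sub>E (UNIV::'a set). card {x\<in>S. P x \<and> restrict (h x) J = b} = c"
    and b': "b' \<in> J' \<rightarrow>\<^sub>E (UNIV :: 'a set)"
  shows "card {x\<in>S. P x \<and> restrict (h x) J' = b'} = c * card ((J - J') \<rightarrow>\<^sub>E (UNIV :: 'a set))"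
proof -
  let ?E = "{b \<in> J \<rightarrow>\<^sub>E (UNIV :: 'a set). restrict b J' = b'}"
  have eq: "{x\<in>S. P x \<and> restrict (h x) J' = b'} = (\<Union>b\<in>?E. {x\<in>S. P x \<and> restrict (h x) J = b})"
  proof (intro equalityI subsetI)
    fix x assume x: "x \<in> {x\<in>S. P x \<and> restrict (h x) J' = b'}"
    have "restrict (restrict (h x) J) J' = restrict (h x) J'" using JJ
      by (auto simp: restrict_def fun_eq_iff)
    then have "restrict (restrict (h x) J) J' = b'" using x by simp
    then show "x \<in> (\<Union>b\<in>?E. {x\<in>S. P x \<and> restrict (h x) J = b})" using x by auto
  next
    fix x assume "x \<in> (\<Union>b\<in>?E. {x\<in>S. P x \<and> restrict (h x) J = b})"
    then obtain b where b: "b \<in> ?E" "x \<in> S" "P x" "restrict (h x) J = b" by blast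
    have "restrict (h x) J' = restrict (restrict (h x) J) J'" using JJ
      by (auto simp: restrict_def fun_eq_iff) 
    then show "x \<in> {x\<in>S. P x \<and> restrict (h x) J' = b'}" using b by auto
  qed
  have fE: "finite ?E" by (rule finite_subset[of _ "J \<rightarrow>\<^sub>E (UNIV :: 'a set)"]) (auto intro: finite_PiE fJ)
  have "card {x\<in>S. P x \<and> restrict (h x) J' = b'} = (\<Sum>b\<in>?E. card {x\<in>S. P x \<and> restrict (h x) J = b})"
    unfolding eq by (rule card_UN_disjoint[OF fE]) (use S in auto)
  also have "\<dots> = (\<Sum>b\<in>?E. c)" using H by (intro sum.cong) auto
  also have "\<dots> = c * card ?E" by simp
  also have "card ?E = card ((J - J') \<rightarrow>\<^sub>E (UNIV :: 'a set))" by (rule ext_card[OF JJ b'])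
  finally show ?thesis .
qed

lemma extend_set:
  assumes "finite A" "B \<subseteq> A" "card B \<le> n" "n \<le> card A"
  obtains C where "B \<subseteq> C" "C \<subseteq> A" "card C = n"
proof -
  have "n - card B \<le> card (A - B)" using assms by (simp add: card_Diff_subset finite_subset)
  then obtain T where T: "T \<subseteq> A - B" "card T = n - card B" "finite T"
    by (rule obtain_subset_with_card_n)
  have "card (B \<union> T) = card B + card T"
    using T assms by (intro card_Un_disjoint) (auto intro: finite_subset)
  then have "card (B \<union> T) = n" using T assms(3) by simp
  moreover have "B \<union> T \<subseteq> A" using T assms(2) by blast
  ultimately show ?thesis by (intro that[of "B \<union> T"]) auto
qed

lemma fin_cv: "finite (carrier_vec n :: 'a::finite vec set)"
proof -
  have fin: "finite ((\<lambda>f. vec n f) ` ({..<n} \<rightarrow>\<^sub>E (UNIV :: 'a set)))"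
    by (rule finite_imageI, rule finite_PiE) simp_all
  have sub: "carrier_vec n \<subseteq> (\<lambda>f. vec n f) ` ({..<n} \<rightarrow>\<^sub>E (UNIV :: 'a set))"
  proof
    fix v :: "'a vec" assume v: "v \<in> carrier_vec n"
    have dv: "dim_vec v = n" using v by (rule carrier_vecD)
    have "v = vec n (restrict (vec_index v) {..<n})"
      by (rule eq_vecI) (simp_all add: dv)
    moreover have "restrict (vec_index v) {..<n} \<in> {..<n} \<rightarrow>\<^sub>E (UNIV :: 'a set)" by simp
    ultimately show "v \<in> (\<lambda>f. vec n f) ` ({..<n} \<rightarrow>\<^sub>E (UNIV :: 'a set))" by (rule image_eqI)
  qed
  show ?thesis by (rule finite_subset[OF sub fin])
qed

theorem mainTheorem8:
  fixes M :: "'a::{field,finite} mat"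
    and ti to to' s :: nat
  assumes "1 \<le> ti" and "ti \<le> to" and "to \<le> s"
    and "linear_AONT ti to s M"
    and "to \<le> to'" and "to' \<le> s"
  shows "\<exists>M' :: 'a mat. linear_AONT ti to' s M'"
proof (intro exI[of _ M])
  note A = assms(4)[unfolded linear_AONT_def]
  show "linear_AONT ti to' s M"
    unfolding linear_AONT_def
  proof (intro conjI allI impI)
    show "M \<in> carrier_mat s s" "invertible_mat M" using A by auto
    fix I J' assume IJ: "I \<subseteq> {..<s} \<and> card I = ti \<and> J' \<subseteq> {..<s} \<and> card J' = s - to'"
    obtain J where J: "J' \<subseteq> J" "J \<subseteq> {..<s}" "card J = s - to"
      by (rule extend_set[of "{..<s}" J' "s - to"]) (use IJ assms in auto)
    from A IJ J obtain c where c: "\<forall>a \<in> I \<rightarrow>\<^sub>E (UNIV :: 'a set). \<forall>b \<in> J \<rightarrow>\<^sub>E (UNIV :: 'a set).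
           card {x \<in> carrier_vec s.
                  restrict (vec_index x) I = a \<and>
                  restrict (vec_index (row_vec_mult x (inv_of_mat M))) J = b} = c" by blast
    have fin: "finite (carrier_vec s :: 'a vec set)" by (rule fin_cv)
    show "\<exists>c. \<forall>a \<in> I \<rightarrow>\<^sub>E (UNIV :: 'a set). \<forall>b \<in> J' \<rightarrow>\<^sub>E (UNIV :: 'a set).
           card {x \<in> carrier_vec s.
                  restrict (vec_index x) I = a \<and>
                  restrict (vec_index (row_vec_mult x (inv_of_mat M))) J' = b} = c"
    proof (intro exI ballI)
      fix a b assume a: "a \<in> I \<rightarrow>\<^sub>E (UNIV :: 'a set)" and b: "b \<in> J' \<rightarrow>\<^sub>E (UNIV :: 'a set)"
      show "card {x \<in> carrier_vec s.
                  restrict (vec_index x) I = a \<and>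
                  restrict (vec_index (row_vec_mult x (inv_of_mat M))) J' = b}
            = c * card ((J - J') \<rightarrow>\<^sub>E (UNIV :: 'a set))"
        by (rule marg[OF fin J(1) finite_subset[OF J(2) finite_lessThan] _ b, where P = "\<lambda>x. restrict (vec_index x) I = a"
              and h = "\<lambda>x. vec_index (row_vec_mult x (inv_of_mat M))"])
           (rule bspec[OF c a])
    qed
  qed
qed

end
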